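(* Let $A\subseteq\mathbb N_0\times\mathbb S$ be a Schnorr test for a non-degenerate computable forecasting system $\varphi$ such that $A_n$ is a partial cut for every $n\in\mathbb N_0$. Then there is a recursive map $\tilde e:\mathbb N_0\times\mathbb S\to\mathbb N_0$ such that $\tilde e(\cdot,s)$ is a growth function for every $s\in\mathbb S$ and $$\overline P_\varphi\big([A_n^{\ge\ell}]\mid s\big)\le2^{-N}\quad\text{for all }(N,n,s)\in\mathbb N_0^2\times\mathbb S\text{ and all }\ell\ge\tilde e(N,s).$$
   Context: $\mathbb N_0=\{0,1,\dots\}$; $\Omega=\{0,1\}^{\mathbb N}$; $\mathbb S$ finite binary strings, $\square$ empty string, $|s|$ length, $\omega^n$ first $n$ entries; $[s]=\{\omega:\omega^{|s|}=s\}$, $[A]=\bigcup_{s\in A}[s]$; a partial cut is a prefix-free subset of $\mathbb S$. For $A\subseteq\mathbb N_0\times\mathbb S$: $A_n=\{s:(n,s)\in A\}$, $A_n^{<\ell}=\{s\in A_n:|s|<\ell\}$, $A_n^{\ge\ell}=\{s\in A_n:|s|\ge\ell\}$. $\mathcal I$: nonempty closed subintervals of $[0,1]$; $\overline E_I(f)=\max_{p\in I}[pf(1)+(1-p)f(0)]$. Forecasting system $\varphi:\mathbb S\to\mathcal I$, $\underline\varphi=\min\varphi$, $\overline\varphi=\max\varphi$; non-degenerate if $\underline\varphi(s)<1$ and $\overline\varphi(s)>0$ for all $s$; computable if $\underline\varphi,\overline\varphi$ are computable real maps. Supermartingale: $M:\mathbb S\to\mathbb R$ with $\overline E_{\varphi(s)}(M(s\,\cdot))\le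 M(s)$. For $G\subseteq\Omega$, $\overline P_\varphi(G\mid s)=\inf\{M(s):M\text{ supermartingale for }\varphi,\ \liminf_nM(\omega^n)\ge\mathbb 1_G(\omega)\ \forall\omega\in[s]\}$ and $\overline P_\varphi(G)=\overline P_\varphi(G\mid\square)$. A Schnorr test for $\varphi$ is a recursive $A\subseteq\mathbb N_0\times\mathbb S$ with $\overline P_\varphi([A_n])\le2^{-n}$ for all $n$, and a recursive $e:\mathbb N_0^2\to\mathbb N_0$ with $\overline P_\varphi([A_n]\setminus[A_n^{<\ell}])\le2^{-N}$ for all $(N,n)$ and $\ell\ge e(N,n)$. A growth function is a recursive, non-decreasing, unbounded map $\mathbb N_0\to\mathbb N_0$. *)

theory Defs
  imports "HOL-Analysis.Analysis" "HOL-Library.Sublist"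
begin

datatype recf = Zero | Succ | Proj nat | Comp recf "recf list" | Prim recf recf | Mn recf

inductive eval_rf :: "recf \<Rightarrow> nat list \<Rightarrow> nat \<Rightarrow> bool" where
  ev_zero: "eval_rf Zero xs 0"
| ev_succ: "eval_rf Succ [x] (Suc x)"
| ev_proj: "i < length xs \<Longrightarrow> eval_rf (Proj i) xs (xs ! i)"
| ev_comp: "length ys = length gs \<Longrightarrow> (\<forall>i < length gs. eval_rf (gs ! i) xs (ys ! i))
            \<Longrightarrow> eval_rf f ys z \<Longrightarrow> eval_rf (Comp f gs) xs z"
| ev_prim0: "eval_rf f xs y \<Longrightarrow> eval_rf (Prim f g) (0 # xs) y"
| ev_primS: "eval_rf (Prim f g) (n # xs) y \<Longrightarrow> eval_rf g (y # n # xs) z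
            \<Longrightarrow> eval_rf (Prim f g) (Suc n # xs) z"
| ev_mn: "eval_rf f (n # xs) 0 \<Longrightarrow> (\<forall>m < n. \<exists>k. eval_rf f (m # xs) (Suc k))
            \<Longrightarrow> eval_rf (Mn f) xs n"

definition recursive_fn :: "nat \<Rightarrow> (nat list \<Rightarrow> nat) \<Rightarrow> bool" where
  "recursive_fn k f \<longleftrightarrow> (\<exists>c. \<forall>xs. length xs = k \<longrightarrow> eval_rf c xs (f xs))"

type_synonym bstr = "bool list"   (* True = 1, False = 0 *)

text \<open>Bijective numbering of finite binary strings.\<close>
fun enc_str :: "bstr \<Rightarrow> nat" where
  "enc_str [] = 0"
| "enc_str (b # s) = 2 * enc_str s + (if b then 2 else 1)"

definition recursive_nat2 :: "(nat \<Rightarrow> nat \<Rightarrow> nat) \<Rightarrow> bool" where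
  "recursive_nat2 f \<longleftrightarrow> recursive_fn 2 (\<lambda>xs. f (xs ! 0) (xs ! 1))"

definition recursive_nat_str :: "(nat \<Rightarrow> bstr \<Rightarrow> nat) \<Rightarrow> bool" where
  "recursive_nat_str f \<longleftrightarrow>
     (\<exists>g. recursive_fn 2 g \<and> (\<forall>N s. g [N, enc_str s] = f N s))"

definition recursive_set_nat_str :: "(nat \<times> bstr) set \<Rightarrow> bool" where
  "recursive_set_nat_str A \<longleftrightarrow>
     recursive_nat_str (\<lambda>n s. if (n, s) \<in> A then 1 else 0)"

definition computable_real_map :: "(bstr \<Rightarrow> real) \<Rightarrow> bool" where
  "computable_real_map f \<longleftrightarrow>
     (\<exists>p q r. recursive_fn 2 p \<and> recursive_fn 2 q \<and> recursive_fn 2 r \<and>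
        (\<forall>s k. \<bar>(real (p [enc_str s, k]) - real (q [enc_str s, k])) / (real (r [enc_str s, k]) + 1)
                 - f s\<bar> \<le> 1 / 2 ^ k))"

definition growth_function :: "(nat \<Rightarrow> nat) \<Rightarrow> bool" where
  "growth_function f \<longleftrightarrow> recursive_fn 1 (\<lambda>xs. f (xs ! 0)) \<and> mono f \<and> (\<forall>m. \<exists>n. m \<le> f n)"

type_synonym path = "nat \<Rightarrow> bool"   (* \<omega> = (\<omega>_1, \<omega>_2, ...) stored 0-indexed *)

definition init :: "path \<Rightarrow> nat \<Rightarrow> bstr" where
  "init \<omega> n = map \<omega> [0..<n]"

definition cyl :: "bstr \<Rightarrow> path set" where
  "cyl s = {\<omega>. init \<omega> (length s) = s}"

definition cylset :: "bstr set \<Rightarrow> path set" where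
  "cylset A = (\<Union>s\<in>A. cyl s)"

definition partial_cut :: "bstr set \<Rightarrow> bool" where
  "partial_cut A \<longleftrightarrow> (\<forall>s\<in>A. \<forall>t\<in>A. prefix s t \<longrightarrow> s = t)"

definition sect :: "(nat \<times> bstr) set \<Rightarrow> nat \<Rightarrow> bstr set" where
  "sect A n = {s. (n, s) \<in> A}"

definition sect_lt :: "(nat \<times> bstr) set \<Rightarrow> nat \<Rightarrow> nat \<Rightarrow> bstr set" where
  "sect_lt A n l = {s \<in> sect A n. length s < l}"

definition sect_ge :: "(nat \<times> bstr) set \<Rightarrow> nat \<Rightarrow> nat \<Rightarrow> bstr set" where
  "sect_ge A n l = {s \<in> sect A n. l \<le> length s}"

definition is_interval :: "real set \<Rightarrow> bool" where
  "is_interval I \<longleftrightarrow> (\<exists>a b. 0 \<le> a \<and> a \<le> b \<and> b \<le> 1 \<and> I = {a..b})"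

definition forecasting_system :: "(bstr \<Rightarrow> real set) \<Rightarrow> bool" where
  "forecasting_system \<phi> \<longleftrightarrow> (\<forall>s. is_interval (\<phi> s))"

definition lower_fc :: "(bstr \<Rightarrow> real set) \<Rightarrow> bstr \<Rightarrow> real" where
  "lower_fc \<phi> s = Inf (\<phi> s)"

definition upper_fc :: "(bstr \<Rightarrow> real set) \<Rightarrow> bstr \<Rightarrow> real" where
  "upper_fc \<phi> s = Sup (\<phi> s)"

definition non_degenerate :: "(bstr \<Rightarrow> real set) \<Rightarrow> bool" where
  "non_degenerate \<phi> \<longleftrightarrow> (\<forall>s. lower_fc \<phi> s < 1 \<and> upper_fc \<phi> s > 0)"

definition computable_fs :: "(bstr \<Rightarrow> real set) \<Rightarrow> bool" where
  "computable_fs \<phi> \<longleftrightarrow> computable_real_map (lower_fc \<phi>) \<and> computable_real_map (upper_fc \<phi>)"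

text \<open>Upper expectation w.r.t. an interval of probabilities of outcome 1 (= True).\<close>
definition upper_exp :: "real set \<Rightarrow> (bool \<Rightarrow> real) \<Rightarrow> real" where
  "upper_exp I f = (SUP p\<in>I. p * f True + (1 - p) * f False)"

definition supermartingale :: "(bstr \<Rightarrow> real set) \<Rightarrow> (bstr \<Rightarrow> real) \<Rightarrow> bool" where
  "supermartingale \<phi> M \<longleftrightarrow> (\<forall>s. upper_exp (\<phi> s) (\<lambda>x. M (s @ [x])) \<le> M s)"

definition upper_prob :: "(bstr \<Rightarrow> real set) \<Rightarrow> path set \<Rightarrow> bstr \<Rightarrow> ereal" where
  "upper_prob \<phi> G s = Inf {ereal (M s) | M. supermartingale \<phi> M \<and>
      (\<forall>\<omega>\<in>cyl s. liminf (\<lambda>n. ereal (M (init \<omega> n))) \<ge> ereal (indicator G \<omega>))}"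

definition schnorr_test :: "(bstr \<Rightarrow> real set) \<Rightarrow> (nat \<times> bstr) set \<Rightarrow> bool" where
  "schnorr_test \<phi> A \<longleftrightarrow> recursive_set_nat_str A \<and>
     (\<forall>n. upper_prob \<phi> (cylset (sect A n)) [] \<le> ereal (1 / 2 ^ n)) \<and>
     (\<exists>e. recursive_nat2 e \<and>
        (\<forall>N n l. l \<ge> e N n \<longrightarrow>
           upper_prob \<phi> (cylset (sect A n) - cylset (sect_lt A n l)) [] \<le> ereal (1 / 2 ^ N)))"

end

theory Submission
  imports Defs
begin


lemma rf_cong: "recursive_fn k f \<Longrightarrow> (\<And>xs. length xs = k \<Longrightarrow> f xs = g xs) \<Longrightarrow> recursive_fn k g"
  unfolding recursive_fn_def by metis

lemma rf_zero: "recursive_fn k (\<lambda>_. 0)"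
  unfolding recursive_fn_def by (auto intro: ev_zero)

lemma rf_proj: "i < k \<Longrightarrow> recursive_fn k (\<lambda>xs. xs ! i)"
  unfolding recursive_fn_def by (auto intro: ev_proj)

lemma rf_comp:
  assumes f: "recursive_fn m f" and l: "length gs = m" and g: "\<forall>g\<in>set gs. recursive_fn k g"
  shows "recursive_fn k (\<lambda>xs. f (map (\<lambda>g. g xs) gs))"
proof -
  obtain cf where cf: "\<forall>ys. length ys = m \<longrightarrow> eval_rf cf ys (f ys)" using f unfolding recursive_fn_def by blast
  from g obtain C where C: "\<forall>g\<in>set gs. \<forall>xs. length xs = k \<longrightarrow> eval_rf (C g) xs (g xs)"
    unfolding recursive_fn_def by metis
  show ?thesis unfolding recursive_fn_def
  proof (intro exI allI impI)
    fix xs :: "nat list" assume xs: "length xs = k"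
    show "eval_rf (Comp cf (map C gs)) xs (f (map (\<lambda>g. g xs) gs))"
      by (rule ev_comp[where ys="map (\<lambda>g. g xs) gs"]) (use C cf l xs in auto)
  qed
qed

lemma rf_succ: "recursive_fn k F \<Longrightarrow> recursive_fn k (\<lambda>xs. Suc (F xs))"
proof -
  assume "recursive_fn k F"
  have "recursive_fn 1 (\<lambda>ys. Suc (ys ! 0))" unfolding recursive_fn_def
  proof (intro exI allI impI)
    fix ys :: "nat list" assume "length ys = 1"
    then obtain y where "ys = [y]" by (cases ys) auto
    then show "eval_rf Succ ys (Suc (ys ! 0))" by (auto intro: ev_succ)
  qed
  from rf_comp[OF this, of "[F]" k] \<open>recursive_fn k F\<close> show ?thesis by simp
qed

lemma rf_const: "recursive_fn k (\<lambda>_. c)"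
  by (induction c) (auto intro: rf_zero rf_succ)

lemma rf_prim:
  assumes f: "recursive_fn k f" and g: "recursive_fn (Suc (Suc k)) g"
  shows "recursive_fn (Suc k) (\<lambda>xs. rec_nat (f (tl xs)) (\<lambda>n y. g (y # n # tl xs)) (hd xs))"
proof -
  obtain cf where cf: "\<forall>ys. length ys = k \<longrightarrow> eval_rf cf ys (f ys)" using f unfolding recursive_fn_def by blast
  obtain cg where cg: "\<forall>ys. length ys = Suc (Suc k) \<longrightarrow> eval_rf cg ys (g ys)" using g unfolding recursive_fn_def by blast
  have *: "eval_rf (Prim cf cg) (n # ys) (rec_nat (f ys) (\<lambda>n y. g (y # n # ys)) n)" if "length ys = k" for n ys
  proof (induction n)
    case 0 then show ?case using cf that by (auto intro: ev_prim0)
  next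
    case (Suc n) then show ?case using cg that by (auto intro: ev_primS)
  qed
  show ?thesis unfolding recursive_fn_def
  proof (intro exI allI impI)
    fix xs :: "nat list" assume "length xs = Suc k"
    then obtain n ys where "xs = n # ys" "length ys = k" by (cases xs) auto
    then show "eval_rf (Prim cf cg) xs (rec_nat (f (tl xs)) (\<lambda>n y. g (y # n # tl xs)) (hd xs))"
      using * by simp
  qed
qed

lemma rf_mn:
  assumes f: "recursive_fn (Suc k) f" and ex: "\<And>xs. length xs = k \<Longrightarrow> \<exists>n. f (n # xs) = 0"
  shows "recursive_fn k (\<lambda>xs. LEAST n. f (n # xs) = 0)"
proof -
  obtain cf where cf: "\<forall>ys. length ys = Suc k \<longrightarrow> eval_rf cf ys (f ys)" using f unfolding recursive_fn_def by blast
  show ?thesis unfolding recursive_fn_def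
  proof (intro exI allI impI)
    fix xs :: "nat list" assume xs: "length xs = k"
    let ?n = "LEAST n. f (n # xs) = 0"
    have "f (?n # xs) = 0" using ex[OF xs] by (rule LeastI_ex)
    moreover have "\<forall>m<?n. \<exists>j. eval_rf cf (m # xs) (Suc j)"
    proof (intro allI impI)
      fix m assume "m < ?n"
      then have "f (m # xs) \<noteq> 0" by (rule not_less_Least)
      then obtain j where "f (m # xs) = Suc j" using not0_implies_Suc by blast
      then show "\<exists>j. eval_rf cf (m # xs) (Suc j)" using cf xs by (metis length_Cons)
    qed
    ultimately show "eval_rf (Mn cf) xs ?n" using cf xs by (intro ev_mn) (auto, metis length_Cons)
  qed
qed


lemma rf_app1: "recursive_fn 1 h \<Longrightarrow> recursive_fn k F \<Longrightarrow> recursive_fn k (\<lambda>xs. h [F xs])"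
  using rf_comp[of 1 h "[F]" k] by simp

lemma rf_app2: "recursive_fn 2 h \<Longrightarrow> recursive_fn k F \<Longrightarrow> recursive_fn k G \<Longrightarrow>
   recursive_fn k (\<lambda>xs. h [F xs, G xs])"
  using rf_comp[of 2 h "[F, G]" k] by simp

lemma map_nth_upt: "length xs = k \<Longrightarrow> map (\<lambda>i. xs ! i) [0..<k] = xs"
  by (metis map_nth)

lemma rf_cong': "recursive_fn k f \<Longrightarrow> k = k' \<Longrightarrow> (\<And>xs. length xs = k' \<Longrightarrow> f xs = g xs) \<Longrightarrow> recursive_fn k' g"
  unfolding recursive_fn_def by metis

lemma rf_tl: assumes "recursive_fn k F" shows "recursive_fn (Suc k) (\<lambda>xs. F (tl xs))"
proof -
  have "recursive_fn (Suc k) (\<lambda>xs. F (map (\<lambda>g. g xs) (map (\<lambda>i xs. xs ! Suc i) [0..<k])))"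
    by (rule rf_comp[OF assms]) (auto intro: rf_proj)
  then show ?thesis
  proof (rule rf_cong)
    fix xs :: "nat list" assume "length xs = Suc k"
    then show "F (map (\<lambda>g. g xs) (map (\<lambda>i xs. xs ! Suc i) [0..<k])) = F (tl xs)"
      by (cases xs) (auto simp: map_nth_upt o_def)
  qed
qed

lemma rf_cons: assumes "recursive_fn (Suc k) F" "recursive_fn k B"
  shows "recursive_fn k (\<lambda>xs. F (B xs # xs))"
proof -
  have "recursive_fn k (\<lambda>xs. F (map (\<lambda>g. g xs) (B # map (\<lambda>i xs. xs ! i) [0..<k])))"
    by (rule rf_comp[OF assms(1)]) (auto intro: rf_proj assms(2))
  then show ?thesis by (rule rf_cong) (simp add: map_nth_upt o_def)
qed

lemma len2E: "length xs = 2 \<Longrightarrow> (\<And>a b. xs = [a, b] \<Longrightarrow> P) \<Longrightarrow> P"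
  by (cases xs; cases "tl xs"; auto)

lemma len1E: "length xs = 1 \<Longrightarrow> (\<And>a. xs = [a] \<Longrightarrow> P) \<Longrightarrow> P"
  by (cases xs; auto)

lemma recnat_add: "rec_nat b (\<lambda>n y. Suc y) a = a + (b::nat)"
  by (induction a) auto

lemma rf_add2: "recursive_fn 2 (\<lambda>xs. xs ! 0 + xs ! 1)"
proof -
  have "recursive_fn (Suc 1) (\<lambda>xs. rec_nat ((\<lambda>ys. ys ! 0) (tl xs)) (\<lambda>n y. (\<lambda>zs. Suc (zs ! 0)) (y # n # tl xs)) (hd xs))"
    by (rule rf_prim) (auto intro: rf_proj rf_succ)
  then show ?thesis
    by (rule rf_cong') (auto elim!: len2E simp: recnat_add)
qed

lemma rf_add: "recursive_fn k F \<Longrightarrow> recursive_fn k G \<Longrightarrow> recursive_fn k (\<lambda>xs. F xs + G xs)"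
  using rf_app2[OF rf_add2, of k F G] by simp

lemma recnat_mult: "rec_nat 0 (\<lambda>n y. y + b) a = a * (b::nat)"
  by (induction a) auto

lemma rf_mult2: "recursive_fn 2 (\<lambda>xs. xs ! 0 * xs ! 1)"
proof -
  have "recursive_fn (Suc 1) (\<lambda>xs. rec_nat ((\<lambda>ys. 0) (tl xs)) (\<lambda>n y. (\<lambda>zs. zs ! 0 + zs ! 2) (y # n # tl xs)) (hd xs))"
    by (rule rf_prim[OF rf_const], rule rf_add[OF rf_proj rf_proj]) simp_all
  then show ?thesis
    by (rule rf_cong') (auto elim!: len2E simp: recnat_mult)
qed

lemma rf_mult: "recursive_fn k F \<Longrightarrow> recursive_fn k G \<Longrightarrow> recursive_fn k (\<lambda>xs. F xs * G xs)"
  using rf_app2[OF rf_mult2, of k F G] by simp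

lemma rf_pred1: "recursive_fn 1 (\<lambda>xs. xs ! 0 - 1)"
proof -
  have "recursive_fn (Suc 0) (\<lambda>xs. rec_nat ((\<lambda>ys. 0) (tl xs)) (\<lambda>n y. (\<lambda>zs. zs ! 1) (y # n # tl xs)) (hd xs))"
    by (rule rf_prim[OF rf_const rf_proj]) simp
  then show ?thesis
  proof (rule rf_cong', simp)
    fix xs :: "nat list" assume "length xs = 1"
    then obtain a where "xs = [a]" by (rule len1E)
    then show "rec_nat ((\<lambda>ys. 0) (tl xs)) (\<lambda>n y. (\<lambda>zs. zs ! 1) (y # n # tl xs)) (hd xs) = xs ! 0 - 1"
      by (cases a) auto
  qed
qed

lemma recnat_sub: "rec_nat b (\<lambda>n y. y - Suc 0) a = (b::nat) - a"
  by (induction a) auto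

lemma rf_sub2: "recursive_fn 2 (\<lambda>xs. xs ! 1 - xs ! 0)"
proof -
  have "recursive_fn (Suc 1) (\<lambda>xs. rec_nat ((\<lambda>ys. ys ! 0) (tl xs)) (\<lambda>n y. (\<lambda>zs. zs ! 0 - 1) (y # n # tl xs)) (hd xs))"
    by (rule rf_prim[OF rf_proj], simp, rule rf_cong'[OF rf_app1[OF rf_pred1 rf_proj[of 0]]]) simp_all
  then show ?thesis
    by (rule rf_cong') (auto elim!: len2E simp: recnat_sub)
qed

lemma rf_sub: "recursive_fn k F \<Longrightarrow> recursive_fn k G \<Longrightarrow> recursive_fn k (\<lambda>xs. F xs - G xs)"
  using rf_app2[OF rf_sub2, of k G F] by simp

lemma recnat_pow: "rec_nat (Suc 0) (\<lambda>n y. y + y) a = (2::nat) ^ a"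
  by (induction a) auto

lemma rf_pow2_1: "recursive_fn 1 (\<lambda>xs. 2 ^ (xs ! 0))"
proof -
  have "recursive_fn (Suc 0) (\<lambda>xs. rec_nat ((\<lambda>ys. 1) (tl xs)) (\<lambda>n y. (\<lambda>zs. zs ! 0 + zs ! 0) (y # n # tl xs)) (hd xs))"
    by (rule rf_prim[OF rf_const], rule rf_add[OF rf_proj rf_proj]) simp_all
  then show ?thesis
    by (rule rf_cong') (auto simp: recnat_pow elim!: len1E[simplified])
qed

lemma rf_pow2: "recursive_fn k F \<Longrightarrow> recursive_fn k (\<lambda>xs. 2 ^ F xs)"
  using rf_app1[OF rf_pow2_1, of k F] by simp

lemma recnat_sum: "rec_nat 0 (\<lambda>n y. y + F n) a = (\<Sum>j<a. F j :: nat)"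
  by (induction a) auto

lemma rf_sum:
  assumes F: "recursive_fn (Suc k) F" and B: "recursive_fn k B"
  shows "recursive_fn k (\<lambda>xs. \<Sum>j<B xs. F (j # xs))"
proof -
  have "recursive_fn (Suc k) (\<lambda>xs. rec_nat ((\<lambda>ys. 0) (tl xs)) (\<lambda>n y. (\<lambda>zs. zs ! 0 + F (tl zs)) (y # n # tl xs)) (hd xs))"
    by (rule rf_prim[OF rf_const], rule rf_add[OF rf_proj rf_tl[OF F]]) simp
  then have "recursive_fn k (\<lambda>xs. (\<lambda>xs. rec_nat ((\<lambda>ys. 0) (tl xs)) (\<lambda>n y. (\<lambda>zs. zs ! 0 + F (tl zs)) (y # n # tl xs)) (hd xs)) (B xs # xs))"
    by (rule rf_cons[OF _ B])
  then show ?thesis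
    by (rule rf_cong) (simp add: recnat_sum)
qed



lemma fs_facts:
  assumes "forecasting_system \<phi>"
  shows "\<phi> s = {lower_fc \<phi> s..upper_fc \<phi> s} \<and> 0 \<le> lower_fc \<phi> s \<and> lower_fc \<phi> s \<le> upper_fc \<phi> s \<and> upper_fc \<phi> s \<le> 1"
proof -
  obtain a b where ab: "0 \<le> a" "a \<le> b" "b \<le> 1" "\<phi> s = {a..b}"
    using assms unfolding forecasting_system_def is_interval_def by blast
  then have "lower_fc \<phi> s = a" "upper_fc \<phi> s = b" unfolding lower_fc_def upper_fc_def by auto
  with ab show ?thesis by auto
qed

lemma sm_le:
  assumes fs: "forecasting_system \<phi>" and sm: "supermartingale \<phi> M" and p: "p \<in> \<phi> s"
  shows "p * M (s @ [True]) + (1 - p) * M (s @ [False]) \<le> M s"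
proof -
  have I: "\<phi> s = {lower_fc \<phi> s..upper_fc \<phi> s}" "0 \<le> lower_fc \<phi> s" "upper_fc \<phi> s \<le> 1"
    using fs_facts[OF fs] by auto
  let ?f = "\<lambda>p. p * M (s @ [True]) + (1 - p) * M (s @ [False])"
  have aux: "0 \<le> c \<Longrightarrow> c \<le> 1 \<Longrightarrow> c * x \<le> \<bar>x\<bar>" for c x :: real
  proof -
    assume c: "0 \<le> c" "c \<le> 1"
    have "c * x \<le> c * \<bar>x\<bar>" using c by (simp add: mult_left_mono)
    also have "\<dots> \<le> 1 * \<bar>x\<bar>" using c by (intro mult_right_mono) auto
    finally show ?thesis by simp
  qed
  have bdd: "bdd_above (?f ` \<phi> s)"
  proof (rule bdd_aboveI2)
    fix q assume "q \<in> \<phi> s"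
    then have q: "0 \<le> q" "q \<le> 1" using I by auto
    have "q * M (s @ [True]) \<le> \<bar>M (s @ [True])\<bar>"
      using q aux by blast
    moreover have "(1 - q) * M (s @ [False]) \<le> \<bar>M (s @ [False])\<bar>"
      using q aux[of "1 - q"] by simp
    ultimately show "?f q \<le> \<bar>M (s @ [True])\<bar> + \<bar>M (s @ [False])\<bar>" by linarith
  qed
  have "?f p \<le> upper_exp (\<phi> s) (\<lambda>x. M (s @ [x]))"
    unfolding upper_exp_def by (rule cSUP_upper[OF p bdd])
  also have "\<dots> \<le> M s" using sm unfolding supermartingale_def by blast
  finally show ?thesis .
qed

lemma init_0[simp]: "init \<omega> 0 = []" by (simp add: init_def)

lemma cyl_Nil[simp]: "cyl [] = UNIV" by (simp add: cyl_def)

lemma sm_nonneg: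
  assumes fs: "forecasting_system \<phi>" and sm: "supermartingale \<phi> M"
    and lim: "\<forall>\<omega>. liminf (\<lambda>n. ereal (M (init \<omega> n))) \<ge> 0"
  shows "M t \<ge> 0"
proof (rule ccontr)
  assume neg: "\<not> M t \<ge> 0"
  define nxt where "nxt u = (M (u @ [True]) \<le> M u)" for u
  define u where "u i = rec_nat t (\<lambda>_ v. v @ [nxt v]) i" for i
  have u0: "u 0 = t" and uS: "u (Suc i) = u i @ [nxt (u i)]" for i by (simp_all add: u_def)
  have step: "M (v @ [nxt v]) \<le> M v" for v
  proof (cases "nxt v")
    case True then show ?thesis by (simp add: nxt_def)
  next
    case False
    then have gt: "M (v @ [True]) > M v" by (simp add: nxt_def)
    let ?p = "lower_fc \<phi> v"
    have p: "?p \<in> \<phi> v" "0 \<le> ?p" "?p \<le> 1" using fs_facts[OF fs, of v] by auto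
    have le: "?p * M (v @ [True]) + (1 - ?p) * M (v @ [False]) \<le> M v" by (rule sm_le[OF fs sm p(1)])
    show ?thesis
    proof (rule ccontr)
      assume "\<not> M (v @ [nxt v]) \<le> M v"
      then have gt2: "M (v @ [False]) > M v" using False by simp
      have "?p * M (v @ [True]) \<ge> ?p * M v" using gt p by (simp add: mult_left_mono)
      moreover have "(1 - ?p) * M (v @ [False]) \<ge> (1 - ?p) * M v" using gt2 p by (simp add: mult_left_mono)
      moreover have "?p * M (v @ [True]) > ?p * M v \<or> (1 - ?p) * M (v @ [False]) > (1 - ?p) * M v"
        using gt gt2 p by (cases "?p = 1") auto
      ultimately have "?p * M (v @ [True]) + (1 - ?p) * M (v @ [False]) > ?p * M v + (1 - ?p) * M v"
        by linarith
      then show False using le by (simp add: algebra_simps)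
    qed
  qed
  have Mle: "M (u i) \<le> M t" for i
  proof (induction i)
    case 0 then show ?case by (simp add: u0)
  next
    case (Suc i) then show ?case using step[of "u i"] by (simp add: uS)
  qed
  have len: "length (u i) = length t + i" for i by (induction i) (simp_all add: u0 uS)
  have nth: "i \<le> k \<Longrightarrow> j < length (u i) \<Longrightarrow> u i ! j = u k ! j" for i j k
  proof (induction k)
    case 0 then show ?case by simp
  next
    case (Suc k)
    show ?case
    proof (cases "i = Suc k")
      case True then show ?thesis by simp
    next
      case False
      then have "i \<le> k" using Suc by simp
      then have "j < length (u k)" using Suc len by simp
      then show ?thesis using Suc \<open>i \<le> k\<close> by (simp add: uS nth_append)
    qed
  qed
  define \<omega> where "\<omega> j = u (Suc j) ! j" for j
  have init_u: "init \<omega> (length t + i) = u i" for i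
  proof (rule nth_equalityI)
    show "length (init \<omega> (length t + i)) = length (u i)" by (simp add: init_def len)
  next
    fix j assume "j < length (init \<omega> (length t + i))"
    then have j: "j < length t + i" by (simp add: init_def)
    have "u (Suc j) ! j = u (max (Suc j) i) ! j" by (rule nth) (auto simp: len)
    also have "\<dots> = u i ! j" by (rule nth[symmetric]) (use j len in auto)
    finally show "init \<omega> (length t + i) ! j = u i ! j" using j by (simp add: init_def \<omega>_def)
  qed
  have ev1: "eventually (\<lambda>n. ereal (M t) < ereal (M (init \<omega> n))) sequentially"
  proof -
    have "ereal 0 \<le> liminf (\<lambda>n. ereal (M (init \<omega> n)))" using lim by (simp add: zero_ereal_def)
    then have "\<forall>y<ereal 0. eventually (\<lambda>n. y < ereal (M (init \<omega> n))) sequentially"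
      by (simp only: le_Liminf_iff)
    moreover have "ereal (M t) < ereal 0" using neg by simp
    ultimately show ?thesis by blast
  qed
  have ev2: "eventually (\<lambda>n. ereal (M (init \<omega> n)) \<le> ereal (M t)) sequentially"
    unfolding eventually_sequentially
  proof (intro exI allI impI)
    fix n assume "length t \<le> n"
    then have "n = length t + (n - length t)" by simp
    then have "init \<omega> n = u (n - length t)" using init_u by metis
    then show "ereal (M (init \<omega> n)) \<le> ereal (M t)" using Mle by simp
  qed
  from eventually_conj[OF ev1 ev2] have "eventually (\<lambda>n. False) sequentially"
    by (rule eventually_mono) auto
  then show False by simp
qed


lemma sum_take_snoc: "(\<Sum>j<length (s @ [b]). w (take j (s @ [b]))) = (\<Sum>j<length s. w (take j s)) + (w s :: nat)"
proof -
  have "(\<Sum>j<length (s @ [b]). w (take j (s @ [b]))) = (\<Sum>j<Suc (length s). w (take j (s @ [b])))" by simp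
  also have "\<dots> = (\<Sum>j<length s. w (take j (s @ [b]))) + w (take (length s) (s @ [b]))" by (rule sum.lessThan_Suc)
  also have "(\<Sum>j<length s. w (take j (s @ [b]))) = (\<Sum>j<length s. w (take j s))" by (rule sum.cong) auto
  finally show ?thesis by simp
qed

lemma sm_growth:
  assumes fs: "forecasting_system \<phi>" and sm: "supermartingale \<phi> M" and nn: "\<And>t. M t \<ge> 0"
    and w: "\<And>t. 1 / 2 ^ w t \<le> upper_fc \<phi> t" "\<And>t. 1 / 2 ^ w t \<le> 1 - lower_fc \<phi> t"
  shows "M s \<le> M [] * 2 ^ (\<Sum>j<length s. w (take j s))"
proof (induction s rule: rev_induct)
  case Nil then show ?case by simp
next
  case (snoc b s)
  have facts: "\<phi> s = {lower_fc \<phi> s..upper_fc \<phi> s}" "0 \<le> lower_fc \<phi> s" "lower_fc \<phi> s \<le> upper_fc \<phi> s" "upper_fc \<phi> s \<le> 1"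
    using fs_facts[OF fs] by auto
  have pos: "(0::real) < 2 ^ w s" by simp
  have key: "M (s @ [b]) \<le> M s * 2 ^ w s"
  proof (cases b)
    case True
    let ?p = "upper_fc \<phi> s"
    have "?p * M (s @ [True]) + (1 - ?p) * M (s @ [False]) \<le> M s"
      by (rule sm_le[OF fs sm]) (use facts in auto)
    moreover have "(1 - ?p) * M (s @ [False]) \<ge> 0" using facts nn by simp
    ultimately have a: "?p * M (s @ [True]) \<le> M s" by linarith
    have "M (s @ [True]) = 2 ^ w s * ((1 / 2 ^ w s) * M (s @ [True]))" by simp
    also have "\<dots> \<le> 2 ^ w s * (?p * M (s @ [True]))"
      using w(1)[of s] nn[of "s @ [True]"] by (intro mult_left_mono mult_right_mono) auto
    also have "\<dots> \<le> 2 ^ w s * M s" using a by (intro mult_left_mono) auto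
    finally show ?thesis using True by (simp add: mult.commute)
  next
    case False
    let ?p = "lower_fc \<phi> s"
    have "?p * M (s @ [True]) + (1 - ?p) * M (s @ [False]) \<le> M s"
      by (rule sm_le[OF fs sm]) (use facts in auto)
    moreover have "?p * M (s @ [True]) \<ge> 0" using facts nn by simp
    ultimately have a: "(1 - ?p) * M (s @ [False]) \<le> M s" by linarith
    have "M (s @ [False]) = 2 ^ w s * ((1 / 2 ^ w s) * M (s @ [False]))" by simp
    also have "\<dots> \<le> 2 ^ w s * ((1 - ?p) * M (s @ [False]))"
      using w(2)[of s] nn[of "s @ [False]"] by (intro mult_left_mono mult_right_mono) auto
    also have "\<dots> \<le> 2 ^ w s * M s" using a by (intro mult_left_mono) auto
    finally show ?thesis using False by (simp add: mult.commute)
  qed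
  also have "\<dots> \<le> M [] * 2 ^ (\<Sum>j<length s. w (take j s)) * 2 ^ w s"
    using snoc.IH by (intro mult_right_mono) auto
  also have "\<dots> = M [] * 2 ^ (\<Sum>j<length (s @ [b]). w (take j (s @ [b])))"
    by (simp only: sum_take_snoc power_add mult.assoc)
  finally show ?case .
qed

lemma upper_prob_mono:
  assumes "G \<subseteq> H" shows "upper_prob \<phi> G s \<le> upper_prob \<phi> H s"
  unfolding upper_prob_def
proof (rule Inf_superset_mono, safe)
  fix M assume M: "supermartingale \<phi> M" "\<forall>\<omega>\<in>cyl s. ereal (indicator H \<omega>) \<le> liminf (\<lambda>n. ereal (M (init \<omega> n)))"
  have "\<forall>\<omega>\<in>cyl s. ereal (indicator G \<omega>) \<le> liminf (\<lambda>n. ereal (M (init \<omega> n)))"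
  proof
    fix \<omega> assume "\<omega> \<in> cyl s"
    have "indicator G \<omega> \<le> (indicator H \<omega> :: real)" using assms by (auto simp: indicator_def)
    then have "ereal (indicator G \<omega>) \<le> ereal (indicator H \<omega>)" by simp
    also have "\<dots> \<le> liminf (\<lambda>n. ereal (M (init \<omega> n)))" using M \<open>\<omega> \<in> cyl s\<close> by blast
    finally show "ereal (indicator G \<omega>) \<le> liminf (\<lambda>n. ereal (M (init \<omega> n)))" .
  qed
  with M show "\<exists>Ma. ereal (M s) = ereal (Ma s) \<and> supermartingale \<phi> Ma \<and> (\<forall>\<omega>\<in>cyl s. ereal (indicator G \<omega>) \<le> liminf (\<lambda>n. ereal (Ma (init \<omega> n))))"
    by blast
qed

lemma upper_prob_cond:
  assumes fs: "forecasting_system \<phi>"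
    and w: "\<And>t. 1 / 2 ^ w t \<le> upper_fc \<phi> t" "\<And>t. 1 / 2 ^ w t \<le> 1 - lower_fc \<phi> t"
    and root: "upper_prob \<phi> G [] \<le> ereal y"
  shows "upper_prob \<phi> G s \<le> ereal (y * 2 ^ (\<Sum>j<length s. w (take j s)))"
proof (rule ereal_le_epsilon2)
  fix e :: real assume e: "0 < e"
  define W :: real where "W = 2 ^ (\<Sum>j<length s. w (take j s))"
  have W: "W > 0" by (simp add: W_def)
  have "upper_prob \<phi> G [] < ereal (y + e / W)" using root e W
    by (meson divide_pos_pos ereal_less_eq(3) le_less_trans less_add_same_cancel1 not_le)
  then obtain x where x: "x \<in> {ereal (M []) | M. supermartingale \<phi> M \<and>
      (\<forall>\<omega>\<in>cyl []. liminf (\<lambda>n. ereal (M (init \<omega> n))) \<ge> ereal (indicator G \<omega>))}" "x < ereal (y + e / W)"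
    unfolding upper_prob_def Inf_less_iff by blast
  then obtain M where M: "x = ereal (M [])" "supermartingale \<phi> M"
      "\<forall>\<omega>. liminf (\<lambda>n. ereal (M (init \<omega> n))) \<ge> ereal (indicator G \<omega>)" by auto
  have lim0: "\<forall>\<omega>. liminf (\<lambda>n. ereal (M (init \<omega> n))) \<ge> 0"
  proof
    fix \<omega>
    have "(0::ereal) \<le> ereal (indicator G \<omega>)" by (simp add: indicator_def)
    then show "liminf (\<lambda>n. ereal (M (init \<omega> n))) \<ge> 0" using M(3) order_trans by blast
  qed
  have nn: "M t \<ge> 0" for t by (rule sm_nonneg[OF fs M(2) lim0])
  have "upper_prob \<phi> G s \<le> ereal (M s)"
    unfolding upper_prob_def by (rule Inf_lower) (use M in blast)
  also have "M s \<le> M [] * W" unfolding W_def by (rule sm_growth[OF fs M(2) nn w])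
  also have "M [] * W \<le> (y + e / W) * W" using x M(1) W by (intro mult_right_mono) auto
  also have "(y + e / W) * W = y * W + e" using W by (simp add: field_simps)
  finally show "upper_prob \<phi> G s \<le> ereal (y * 2 ^ (\<Sum>j<length s. w (take j s))) + ereal e"
    by (simp add: W_def)
qed

lemma cut_sub:
  assumes "partial_cut (sect A n)"
  shows "cylset (sect_ge A n l) \<subseteq> cylset (sect A n) - cylset (sect_lt A n l)"
proof
  fix \<omega> assume "\<omega> \<in> cylset (sect_ge A n l)"
  then obtain t where t: "t \<in> sect A n" "l \<le> length t" "init \<omega> (length t) = t"
    by (auto simp: cylset_def sect_ge_def cyl_def)
  have "\<omega> \<notin> cylset (sect_lt A n l)"
  proof
    assume "\<omega> \<in> cylset (sect_lt A n l)"
    then obtain u where u: "u \<in> sect A n" "length u < l" "init \<omega> (length u) = u"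
      by (auto simp: cylset_def sect_lt_def cyl_def)
    have lu: "length u \<le> length t" using t(2) u(2) by simp
    have "take (length u) t = take (length u) (map \<omega> [0..<length t])" using t(3) by (simp add: init_def)
    also have "\<dots> = map \<omega> [0..<length u]" using lu by (simp add: take_map)
    also have "\<dots> = u" using u(3) by (simp add: init_def)
    finally have "take (length u) t = u" .
    then have "prefix u t" by (metis take_is_prefix)
    then have "u = t" using assms u(1) t(1) unfolding partial_cut_def by blast
    then show False using t(2) u(2) by simp
  qed
  moreover have "\<omega> \<in> cylset (sect A n)" using t by (auto simp: cylset_def cyl_def)
  ultimately show "\<omega> \<in> cylset (sect A n) - cylset (sect_lt A n l)" by blast
qed

lemma cut_sub2: "cylset (sect_ge A n l) \<subseteq> cylset (sect A n)"
  by (auto simp: cylset_def sect_ge_def)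



lemma enc_inj: "enc_str s = enc_str t \<Longrightarrow> s = t"
proof (induction s arbitrary: t)
  case Nil then show ?case by (cases t) (auto split: if_splits)
next
  case (Cons a s)
  then obtain b t' where t: "t = b # t'" by (cases t) (auto split: if_splits)
  have "a = b \<and> enc_str s = enc_str t'"
  proof (cases a; cases b)
    assume "a" "b" then show ?thesis using Cons.prems t by simp
  next
    assume "a" "\<not> b" then show ?thesis using Cons.prems t by simp presburger
  next
    assume "\<not> a" "b" then show ?thesis using Cons.prems t by simp presburger
  next
    assume "\<not> a" "\<not> b" then show ?thesis using Cons.prems t by simp
  qed
  then show ?case using Cons.IH t by simp
qed

lemma enc_surj: "\<exists>s. enc_str s = n"
proof (induction n rule: less_induct)
  case (less n)
  show ?case
  proof (cases "n = 0")
    case True then show ?thesis by (intro exI[of _ "[]"]) simp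
  next
    case False
    show ?thesis
    proof (cases "even n")
      case True
      define m where "m = n div 2 - 1"
      have m: "n = 2 * m + 2" using True False unfolding m_def by presburger
      then obtain s where "enc_str s = m" using less by fastforce
      then show ?thesis using m by (intro exI[of _ "True # s"]) simp
    next
      case odd: False
      define m where "m = n div 2"
      have m: "n = 2 * m + 1" using odd unfolding m_def by presburger
      then obtain s where "enc_str s = m" using less by fastforce
      then show ?thesis using m by (intro exI[of _ "False # s"]) simp
    qed
  qed
qed

lemma enc_take_le: "enc_str (take j s) \<le> enc_str s"
proof (induction s arbitrary: j)
  case Nil then show ?case by simp
next
  case (Cons a s)
  show ?case
  proof (cases j)
    case 0 then show ?thesis by simp
  next
    case (Suc j')
    have "enc_str (take j' s) \<le> enc_str s" by (rule Cons.IH)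
    then show ?thesis using Suc by simp
  qed
qed


lemma approx_up:
  fixes p q r k :: nat and u :: real
  assumes ap: "\<bar>(real p - real q) / (real r + 1) - u\<bar> \<le> 1 / 2 ^ k"
  shows "q * 2 ^ k + 2 * (r + 1) \<le> p * 2 ^ k \<Longrightarrow> 1 / 2 ^ k \<le> u"
    and "3 / 2 ^ k < u \<Longrightarrow> q * 2 ^ k + 2 * (r + 1) \<le> p * 2 ^ k"
proof -
  define D :: real where "D = 2 ^ k"
  define R :: real where "R = real r + 1"
  define a where "a = (real p - real q) / R"
  have D: "D > 0" and R: "R > 0" by (simp_all add: D_def R_def)
  have pq: "real p - real q = a * R" using R by (simp add: a_def)
  have ap': "\<bar>a - u\<bar> \<le> 1 / D" using ap by (simp add: a_def R_def D_def)
  have "\<bar>a * D - u * D\<bar> = D * \<bar>a - u\<bar>" using D by (metis abs_mult abs_of_pos left_diff_distrib mult.commute)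
  also have "\<dots> \<le> D * (1 / D)" using ap' D by (intro mult_left_mono) auto
  finally have ap2: "\<bar>a * D - u * D\<bar> \<le> 1" using D by simp
  have cast: "real (q * 2 ^ k + 2 * (r + 1)) = real q * D + 2 * R" "real (p * 2 ^ k) = real p * D"
    by (simp_all add: D_def R_def)
  show "q * 2 ^ k + 2 * (r + 1) \<le> p * 2 ^ k \<Longrightarrow> 1 / 2 ^ k \<le> u"
  proof -
    assume "q * 2 ^ k + 2 * (r + 1) \<le> p * 2 ^ k"
    then have "real (q * 2 ^ k + 2 * (r + 1)) \<le> real (p * 2 ^ k)" by (rule of_nat_mono)
    then have "2 * R \<le> (real p - real q) * D" unfolding cast by (simp add: algebra_simps)
    then have "R * 2 \<le> R * (a * D)" unfolding pq by (simp add: algebra_simps)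
    then have "2 \<le> a * D" using R by simp
    then have "1 \<le> u * D" using ap2 by linarith
    then show "1 / 2 ^ k \<le> u" using D unfolding D_def by (simp add: divide_le_eq mult.commute)
  qed
  show "3 / 2 ^ k < u \<Longrightarrow> q * 2 ^ k + 2 * (r + 1) \<le> p * 2 ^ k"
  proof -
    assume "3 / 2 ^ k < u"
    then have "3 < u * D" using D unfolding D_def by (simp add: divide_less_eq mult.commute)
    then have "2 \<le> a * D" using ap2 by linarith
    then have "R * 2 \<le> R * (a * D)" using R by simp
    then have "2 * R \<le> (real p - real q) * D" unfolding pq by (simp add: algebra_simps)
    then have "real (q * 2 ^ k + 2 * (r + 1)) \<le> real (p * 2 ^ k)" unfolding cast by (simp add: algebra_simps)
    then show ?thesis by (simp only: of_nat_le_iff)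
  qed
qed

lemma approx_low:
  fixes p q r k :: nat and l :: real
  assumes ap: "\<bar>(real p - real q) / (real r + 1) - l\<bar> \<le> 1 / 2 ^ k"
  shows "p * 2 ^ k + 2 * (r + 1) \<le> (r + 1) * 2 ^ k + q * 2 ^ k \<Longrightarrow> 1 / 2 ^ k \<le> 1 - l"
    and "3 / 2 ^ k < 1 - l \<Longrightarrow> p * 2 ^ k + 2 * (r + 1) \<le> (r + 1) * 2 ^ k + q * 2 ^ k"
proof -
  define D :: real where "D = 2 ^ k"
  define R :: real where "R = real r + 1"
  define a where "a = (real p - real q) / R"
  have D: "D > 0" and R: "R > 0" by (simp_all add: D_def R_def)
  have pq: "real p - real q = a * R" using R by (simp add: a_def)
  have ap': "\<bar>a - l\<bar> \<le> 1 / D" using ap by (simp add: a_def R_def D_def)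
  have "\<bar>a * D - l * D\<bar> = D * \<bar>a - l\<bar>" using D by (metis abs_mult abs_of_pos left_diff_distrib mult.commute)
  also have "\<dots> \<le> D * (1 / D)" using ap' D by (intro mult_left_mono) auto
  finally have ap2: "\<bar>a * D - l * D\<bar> \<le> 1" using D by simp
  have cast: "real (p * 2 ^ k + 2 * (r + 1)) = real p * D + 2 * R" "real ((r + 1) * 2 ^ k + q * 2 ^ k) = R * D + real q * D"
    by (simp_all add: D_def R_def algebra_simps)
  show "p * 2 ^ k + 2 * (r + 1) \<le> (r + 1) * 2 ^ k + q * 2 ^ k \<Longrightarrow> 1 / 2 ^ k \<le> 1 - l"
  proof -
    assume "p * 2 ^ k + 2 * (r + 1) \<le> (r + 1) * 2 ^ k + q * 2 ^ k"
    then have "real (p * 2 ^ k + 2 * (r + 1)) \<le> real ((r + 1) * 2 ^ k + q * 2 ^ k)" by (rule of_nat_mono)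
    then have "(real p - real q) * D + 2 * R \<le> R * D" unfolding cast by (simp add: algebra_simps)
    then have "R * (a * D + 2) \<le> R * D" unfolding pq by (simp add: algebra_simps)
    then have "a * D + 2 \<le> D" using R by simp
    then have "1 \<le> (1 - l) * D" using ap2 by (simp add: algebra_simps abs_le_iff)
    then show "1 / 2 ^ k \<le> 1 - l" using D unfolding D_def by (simp add: divide_le_eq mult.commute)
  qed
  show "3 / 2 ^ k < 1 - l \<Longrightarrow> p * 2 ^ k + 2 * (r + 1) \<le> (r + 1) * 2 ^ k + q * 2 ^ k"
  proof -
    assume "3 / 2 ^ k < 1 - l"
    then have "3 < (1 - l) * D" using D unfolding D_def by (simp add: divide_less_eq mult.commute)
    then have "a * D + 2 \<le> D" using ap2 by (simp add: algebra_simps abs_le_iff)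
    then have "R * (a * D + 2) \<le> R * D" using R by simp
    then have "(real p - real q) * D + 2 * R \<le> R * D" unfolding pq by (simp add: algebra_simps)
    then have "real (p * 2 ^ k + 2 * (r + 1)) \<le> real ((r + 1) * 2 ^ k + q * 2 ^ k)" unfolding cast by (simp add: algebra_simps)
    then show ?thesis by (simp only: of_nat_le_iff)
  qed
qed



lemma rf_sum':
  assumes "recursive_fn k' F" "k' = Suc k" "recursive_fn k B"
  shows "recursive_fn k (\<lambda>xs. \<Sum>j<B xs. F (j # xs))"
  using rf_sum[of k F B] assms by simp

lemma rf_proj': "i < k \<Longrightarrow> recursive_fn k (\<lambda>xs. xs ! i)" by (rule rf_proj)

theorem lemma8p3:
  fixes \<phi> :: "bool list \<Rightarrow> real set" and A :: "(nat \<times> bool list) set"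
  assumes "forecasting_system \<phi>" and "non_degenerate \<phi>" and "computable_fs \<phi>"
    and "schnorr_test \<phi> A"
    and "\<forall>n. partial_cut (sect A n)"
  shows "\<exists>e'. recursive_nat_str e' \<and> (\<forall>s. growth_function (\<lambda>N. e' N s)) \<and>
           (\<forall>N n s l. l \<ge> e' N s \<longrightarrow>
              upper_prob \<phi> (cylset (sect_ge A n l)) s \<le> ereal (1 / 2 ^ N))"
proof -
  note fs = assms(1)
  obtain pU qU rU where recU: "recursive_fn 2 pU" "recursive_fn 2 qU" "recursive_fn 2 rU"
    and apU: "\<And>s k. \<bar>(real (pU [enc_str s, k]) - real (qU [enc_str s, k])) / (real (rU [enc_str s, k]) + 1) - upper_fc \<phi> s\<bar> \<le> 1 / 2 ^ k"
    using assms(3) unfolding computable_fs_def computable_real_map_def by blast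
  obtain pL qL rL where recL: "recursive_fn 2 pL" "recursive_fn 2 qL" "recursive_fn 2 rL"
    and apL: "\<And>s k. \<bar>(real (pL [enc_str s, k]) - real (qL [enc_str s, k])) / (real (rL [enc_str s, k]) + 1) - lower_fc \<phi> s\<bar> \<le> 1 / 2 ^ k"
    using assms(3) unfolding computable_fs_def computable_real_map_def by blast
  obtain e where e_rec: "recursive_nat2 e"
    and e_bd: "\<And>N n l. l \<ge> e N n \<Longrightarrow> upper_prob \<phi> (cylset (sect A n) - cylset (sect_lt A n l)) [] \<le> ereal (1 / 2 ^ N)"
    and root: "\<And>n. upper_prob \<phi> (cylset (sect A n)) [] \<le> ereal (1 / 2 ^ n)"
    using assms(4) unfolding schnorr_test_def by blast
  define f1 where "f1 = (\<lambda>ys. qU [ys!1, ys!0] * 2 ^ (ys!0) + 2 * (rU [ys!1, ys!0] + 1) - pU [ys!1, ys!0] * 2 ^ (ys!0))"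
  define f0 where "f0 = (\<lambda>ys. pL [ys!1, ys!0] * 2 ^ (ys!0) + 2 * (rL [ys!1, ys!0] + 1) - ((rL [ys!1, ys!0] + 1) * 2 ^ (ys!0) + qL [ys!1, ys!0] * 2 ^ (ys!0)))"
  define k1 where "k1 = (\<lambda>xs. LEAST n. f1 (n # xs) = 0)"
  define k0 where "k0 = (\<lambda>xs. LEAST n. f0 (n # xs) = 0)"
  define KK where "KK = (\<lambda>xs. \<Sum>t<Suc (xs!0). k0 [t] + k1 [t])"
  define Gs where "Gs = (\<lambda>ys. \<Sum>n<Suc (ys!0 + KK [ys!1]). e (ys!0 + KK [ys!1]) n)"
  define E where "E = (\<lambda>xs. xs!0 + (\<Sum>M<Suc (xs!0). Gs [M, xs!1]))"
  define w where "w t = k0 [enc_str t] + k1 [enc_str t]" for t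

  have app: "recursive_fn 2 (\<lambda>ys. h [ys!1, ys!0])" if "recursive_fn 2 h" for h
    by (rule rf_app2[OF that rf_proj rf_proj]) simp_all
  have f1_rec: "recursive_fn 2 f1" unfolding f1_def
    by (intro rf_sub rf_add rf_mult rf_pow2 rf_proj rf_const app recU; simp)
  have f0_rec: "recursive_fn 2 f0" unfolding f0_def
    by (intro rf_sub rf_add rf_mult rf_pow2 rf_proj rf_const app recL; simp)
  have k1_ex: "\<exists>n. f1 (n # xs) = 0" if len: "length xs = 1" for xs
  proof -
    obtain c where xs: "xs = [c]" using len by (rule len1E)
    obtain t where c: "enc_str t = c" using enc_surj by blast
    have "upper_fc \<phi> t > 0" using assms(2) unfolding non_degenerate_def by blast
    then have "upper_fc \<phi> t / 3 > 0" by simp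
    then obtain k where "(1/2::real) ^ k < upper_fc \<phi> t / 3" using real_arch_pow_inv[of "upper_fc \<phi> t / 3" "1/2"] by auto
    then have "3 / 2 ^ k < upper_fc \<phi> t" by (simp add: power_one_over)
    from approx_up(2)[OF apU this]
    have "f1 (k # xs) = 0" unfolding f1_def xs c[symmetric] by simp
    then show ?thesis by blast
  qed
  have k0_ex: "\<exists>n. f0 (n # xs) = 0" if len: "length xs = 1" for xs
  proof -
    obtain c where xs: "xs = [c]" using len by (rule len1E)
    obtain t where c: "enc_str t = c" using enc_surj by blast
    have "1 - lower_fc \<phi> t > 0" using assms(2) unfolding non_degenerate_def by simp
    then have "(1 - lower_fc \<phi> t) / 3 > 0" by simp
    then obtain k where "(1/2::real) ^ k < (1 - lower_fc \<phi> t) / 3" using real_arch_pow_inv[of "(1 - lower_fc \<phi> t) / 3" "1/2"] by auto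
    then have "3 / 2 ^ k < 1 - lower_fc \<phi> t" by (simp add: power_one_over)
    from approx_low(2)[OF apL this]
    have "f0 (k # xs) = 0" unfolding f0_def xs c[symmetric] by simp
    then show ?thesis by blast
  qed
  have k1_rec: "recursive_fn 1 k1" unfolding k1_def by (rule rf_mn) (use f1_rec k1_ex in \<open>simp_all add: numeral_2_eq_2\<close>)
  have k0_rec: "recursive_fn 1 k0" unfolding k0_def by (rule rf_mn) (use f0_rec k0_ex in \<open>simp_all add: numeral_2_eq_2\<close>)
  have KK_rec: "recursive_fn 1 KK"
  proof -
    have "recursive_fn 2 (\<lambda>ys. k0 [ys!0] + k1 [ys!0])"
      by (intro rf_add rf_app1[OF k0_rec] rf_app1[OF k1_rec] rf_proj) simp_all
    from rf_sum'[OF this _ rf_succ[OF rf_proj[of 0 1]]] show ?thesis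
      unfolding KK_def by (rule rf_cong) simp_all
  qed
  have Gs_rec: "recursive_fn 2 Gs"
  proof -
    have h1: "recursive_fn 3 (\<lambda>ys. (\<lambda>xs. e (xs!0) (xs!1)) [ys!1 + KK [ys!2], ys!0])"
      using e_rec unfolding recursive_nat2_def
      by (intro rf_app2 rf_add rf_app1[OF KK_rec] rf_proj) simp_all
    have h2: "recursive_fn 2 (\<lambda>ys. Suc (ys!0 + KK [ys!1]))"
      by (intro rf_succ rf_add rf_app1[OF KK_rec] rf_proj) simp_all
    have "recursive_fn 2 (\<lambda>ys. \<Sum>j<Suc (ys!0 + KK [ys!1]). (\<lambda>ys. (\<lambda>xs. e (xs!0) (xs!1)) [ys!1 + KK [ys!2], ys!0]) (j # ys))"
      by (rule rf_sum'[OF h1 _ h2]) simp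
    then show ?thesis unfolding Gs_def by (rule rf_cong) simp_all
  qed
  have E_rec: "recursive_fn 2 E"
  proof -
    have "recursive_fn 3 (\<lambda>ys. Gs [ys!0, ys!2])" by (intro rf_app2[OF Gs_rec] rf_proj) simp_all
    from rf_sum'[OF this _ rf_succ[OF rf_proj[of 0 2]]]
    have "recursive_fn 2 (\<lambda>xs. \<Sum>j<Suc (xs!0). (\<lambda>ys. Gs [ys!0, ys!2]) (j # xs))" by simp
    from rf_add[OF rf_proj[of 0 2] this] show ?thesis unfolding E_def by (rule rf_cong) simp_all
  qed

  have w_up: "1 / 2 ^ w t \<le> upper_fc \<phi> t" for t
  proof -
    let ?c = "enc_str t"
    have "f1 (k1 [?c] # [?c]) = 0" unfolding k1_def by (rule LeastI_ex) (rule k1_ex, simp)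
    then have "qU [?c, k1 [?c]] * 2 ^ k1 [?c] + 2 * (rU [?c, k1 [?c]] + 1) \<le> pU [?c, k1 [?c]] * 2 ^ k1 [?c]"
      unfolding f1_def by simp
    from approx_up(1)[OF apU this] have "1 / 2 ^ k1 [?c] \<le> upper_fc \<phi> t" .
    moreover have "(1::real) / 2 ^ w t \<le> 1 / 2 ^ k1 [?c]" unfolding w_def
      by (intro divide_left_mono power_increasing) auto
    ultimately show ?thesis by linarith
  qed
  have w_low: "1 / 2 ^ w t \<le> 1 - lower_fc \<phi> t" for t
  proof -
    let ?c = "enc_str t"
    have "f0 (k0 [?c] # [?c]) = 0" unfolding k0_def by (rule LeastI_ex) (rule k0_ex, simp)
    then have "pL [?c, k0 [?c]] * 2 ^ k0 [?c] + 2 * (rL [?c, k0 [?c]] + 1) \<le> (rL [?c, k0 [?c]] + 1) * 2 ^ k0 [?c] + qL [?c, k0 [?c]] * 2 ^ k0 [?c]"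
      unfolding f0_def by simp
    from approx_low(1)[OF apL this] have "1 / 2 ^ k0 [?c] \<le> 1 - lower_fc \<phi> t" .
    moreover have "(1::real) / 2 ^ w t \<le> 1 / 2 ^ k0 [?c]" unfolding w_def
      by (intro divide_left_mono power_increasing) auto
    ultimately show ?thesis by linarith
  qed
  have W_le: "(\<Sum>j<length s. w (take j s)) \<le> KK [enc_str s]" for s
  proof -
    define h where "h j = enc_str (take j s)" for j
    have inj: "inj_on h {..<length s}"
    proof (rule inj_onI)
      fix i j assume "i \<in> {..<length s}" "j \<in> {..<length s}" "h i = h j"
      then have "take i s = take j s" unfolding h_def by (auto intro: enc_inj)
      then have "length (take i s) = length (take j s)" by simp
      then show "i = j" using \<open>i \<in> _\<close> \<open>j \<in> _\<close> by simp
    qed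
    have "(\<Sum>j<length s. w (take j s)) = (\<Sum>j<length s. (\<lambda>t. k0 [t] + k1 [t]) (h j))"
      unfolding w_def h_def by simp
    also have "\<dots> = (\<Sum>t\<in>h ` {..<length s}. k0 [t] + k1 [t])"
      by (rule sum.reindex[OF inj, symmetric, unfolded comp_def])
    also have "\<dots> \<le> (\<Sum>t<Suc (enc_str s). k0 [t] + k1 [t])"
      by (rule sum_mono2) (auto simp: h_def less_Suc_eq_le enc_take_le)
    finally show ?thesis unfolding KK_def by simp
  qed

  define e' where "e' N s = E [N, enc_str s]" for N s
  show ?thesis
  proof (intro exI[of _ e'] conjI allI impI)
    show "recursive_nat_str e'" unfolding recursive_nat_str_def e'_def using E_rec by blast
  next
    fix s
    show "growth_function (\<lambda>N. e' N s)" unfolding growth_function_def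
    proof (intro conjI allI)
      show "recursive_fn 1 (\<lambda>xs. e' (xs ! 0) s)" unfolding e'_def
        by (rule rf_app2[OF E_rec rf_proj rf_const]) simp
      show "mono (\<lambda>N. e' N s)"
      proof (rule monoI)
        fix N N' :: nat assume "N \<le> N'"
        moreover have "{..<Suc N} \<subseteq> {..<Suc N'}" using \<open>N \<le> N'\<close> by auto
        then have "(\<Sum>M<Suc N. Gs [M, enc_str s]) \<le> (\<Sum>M<Suc N'. Gs [M, enc_str s])"
          by (intro sum_mono2) auto
        with \<open>N \<le> N'\<close> show "e' N s \<le> e' N' s" unfolding e'_def E_def
          by (simp del: sum.lessThan_Suc)
      qed
      fix m show "\<exists>n. m \<le> e' n s" unfolding e'_def E_def by (intro exI[of _ m]) simp
    qed
  next
    fix N n s l assume l: "e' N s \<le> l"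
    define K where "K = KK [enc_str s]"
    have rt: "upper_prob \<phi> (cylset (sect_ge A n l)) [] \<le> ereal (1 / 2 ^ (N + K))"
    proof (cases "N + K \<le> n")
      case True
      have "upper_prob \<phi> (cylset (sect_ge A n l)) [] \<le> upper_prob \<phi> (cylset (sect A n)) []"
        by (rule upper_prob_mono[OF cut_sub2])
      also have "\<dots> \<le> ereal (1 / 2 ^ n)" by (rule root)
      also have "\<dots> \<le> ereal (1 / 2 ^ (N + K))" using True
        by (simp add: divide_left_mono power_increasing)
      finally show ?thesis .
    next
      case False
      have "e (N + K) n \<le> (\<Sum>n'<Suc (N + K). e (N + K) n')"
        by (rule member_le_sum) (use False in auto)
      also have "\<dots> = Gs [N, enc_str s]" unfolding Gs_def K_def by simp
      also have "\<dots> \<le> (\<Sum>M<Suc N. Gs [M, enc_str s])"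
        by (rule member_le_sum[where f="\<lambda>M. Gs [M, enc_str s]"]) auto
      also have "\<dots> \<le> l" using l unfolding e'_def E_def by simp
      finally have "e (N + K) n \<le> l" .
      have "upper_prob \<phi> (cylset (sect_ge A n l)) [] \<le> upper_prob \<phi> (cylset (sect A n) - cylset (sect_lt A n l)) []"
        by (rule upper_prob_mono[OF cut_sub]) (use assms(5) in blast)
      also have "\<dots> \<le> ereal (1 / 2 ^ (N + K))" by (rule e_bd) fact
      finally show ?thesis .
    qed
    have "upper_prob \<phi> (cylset (sect_ge A n l)) s \<le> ereal (1 / 2 ^ (N + K) * 2 ^ (\<Sum>j<length s. w (take j s)))"
      by (rule upper_prob_cond[OF fs w_up w_low rt])
    also have "\<dots> \<le> ereal (1 / 2 ^ (N + K) * 2 ^ K)"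
    proof -
      have "(2::real) ^ (\<Sum>j<length s. w (take j s)) \<le> 2 ^ K"
        using W_le[of s] unfolding K_def by (intro power_increasing) auto
      then have "1 / 2 ^ (N + K) * (2::real) ^ (\<Sum>j<length s. w (take j s)) \<le> 1 / 2 ^ (N + K) * 2 ^ K"
        by (intro mult_left_mono) auto
      then show ?thesis by simp
    qed
    also have "1 / 2 ^ (N + K) * 2 ^ K = (1 / 2 ^ N :: real)"
      by (simp add: power_add)
    finally show "upper_prob \<phi> (cylset (sect_ge A n l)) s \<le> ereal (1 / 2 ^ N)" .
  qed
qed


end
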